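(* Let $(D,T,k)$ be an instance, $\alpha\ge 1$ a real number, and $\sigma=(v_1,\dots,v_n)$ a regular order of $V(D)$ with $\mathrm{cost}(\sigma)\le\alpha k$, such that $(D,T,k)$ is reduced with respect to $\sigma$. Let $t\in T$ and let $e$ be an affected arc above $t$ with span $[v_l,v_r]$. Then, with $\ell=2(\alpha+1)k+2$, we have $t=v_i$ for some $i$ with $l\le i\le l+\ell$ or $r-\ell\le i\le r$.
   Context: $D$ is a tournament, $T\subseteq V(D)$ is the terminal set, $k$ a positive integer. For an order $\sigma=(v_1,\dots,v_n)$: $[v_l,v_r]=\{v_i:l\le i\le r\}$; an arc $v_iv_j$ is forward if $i<j$, backward if $i>j$; the span of backward arc $v_rv_l$ is $[v_l,v_r]$, and it is above each vertex of its span; a backward arc above a terminal is affected; $\mathrm{cost}(\sigma)$ is the number of affected arcs. A non-terminal interval is an interval with no terminal. $N^+_X(v)=\{u\in X:vu\in A(D)\}$, $N^-_X(v)=\{u\in X:uv\in A(D)\}$. $\sigma$ is regular if for every non-terminal interval $I=[v_l,v_r]$, $|N^+_I(v_l)|\ge\lceil(r-l)/2\rceil$ and $|N^-_I(v_r)|\ge\lceil(r-l)/2\rceil$. A $T$-cycle is a directed cycle containing a terminal. The instance is reduced with respect to $\sigma$ if: $k\ge 1$; $D$ contains a $T$-cycle; every vertex of $D$ lies on some $T$-cycle; and there is no affected arc $uv$ above a terminal $t$ for which there exist $k+1$ pairwise arc-disjoint directed paths from $v$ to $u$ each containing $t$ and consisting only of forward arcs. *)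

theory Defs
  imports Complex_Main
begin

text \<open>A digraph is given by a vertex set V and an arc set A of ordered pairs.
  Orders are lists of vertices; positions are 0-based indices.\<close>

definition tournament :: "'a set \<Rightarrow> ('a \<times> 'a) set \<Rightarrow> bool" where
  "tournament V A \<longleftrightarrow> finite V \<and> A \<subseteq> V \<times> V \<and> (\<forall>v. (v, v) \<notin> A) \<and>
     (\<forall>u\<in>V. \<forall>v\<in>V. u \<noteq> v \<longrightarrow> ((u, v) \<in> A \<longleftrightarrow> (v, u) \<notin> A))"

definition is_order :: "'a set \<Rightarrow> 'a list \<Rightarrow> bool" where
  "is_order V \<sigma> \<longleftrightarrow> distinct \<sigma> \<and> set \<sigma> = V"

text \<open>Position of a vertex in the order (meaningful for v in the distinct list).\<close>
definition pos :: "'a list \<Rightarrow> 'a \<Rightarrow> nat" where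
  "pos \<sigma> v = (THE i. i < length \<sigma> \<and> \<sigma> ! i = v)"

definition ival :: "'a list \<Rightarrow> nat \<Rightarrow> nat \<Rightarrow> 'a set" where
  "ival \<sigma> l r = {\<sigma> ! i | i. l \<le> i \<and> i \<le> r \<and> i < length \<sigma>}"

definition forward_arc :: "'a list \<Rightarrow> 'a \<times> 'a \<Rightarrow> bool" where
  "forward_arc \<sigma> e \<longleftrightarrow> pos \<sigma> (fst e) < pos \<sigma> (snd e)"

definition backward_arc :: "'a list \<Rightarrow> 'a \<times> 'a \<Rightarrow> bool" where
  "backward_arc \<sigma> e \<longleftrightarrow> pos \<sigma> (fst e) > pos \<sigma> (snd e)"

text \<open>The backward arc v_r v_l has span [v_l, v_r]; it is above every vertex of its span.\<close>
definition arc_above :: "'a list \<Rightarrow> 'a \<times> 'a \<Rightarrow> 'a \<Rightarrow> bool" where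
  "arc_above \<sigma> e x \<longleftrightarrow> backward_arc \<sigma> e \<and> x \<in> ival \<sigma> (pos \<sigma> (snd e)) (pos \<sigma> (fst e))"

definition affected :: "'a set \<Rightarrow> 'a list \<Rightarrow> 'a \<times> 'a \<Rightarrow> bool" where
  "affected T \<sigma> e \<longleftrightarrow> (\<exists>t\<in>T. arc_above \<sigma> e t)"

definition cost :: "('a \<times> 'a) set \<Rightarrow> 'a set \<Rightarrow> 'a list \<Rightarrow> nat" where
  "cost A T \<sigma> = card {e \<in> A. affected T \<sigma> e}"

definition out_nbrs :: "('a \<times> 'a) set \<Rightarrow> 'a set \<Rightarrow> 'a \<Rightarrow> 'a set" where
  "out_nbrs A X v = {u \<in> X. (v, u) \<in> A}"

definition in_nbrs :: "('a \<times> 'a) set \<Rightarrow> 'a set \<Rightarrow> 'a \<Rightarrow> 'a set" where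
  "in_nbrs A X v = {u \<in> X. (u, v) \<in> A}"

definition regular_order :: "('a \<times> 'a) set \<Rightarrow> 'a set \<Rightarrow> 'a list \<Rightarrow> bool" where
  "regular_order A T \<sigma> \<longleftrightarrow>
     (\<forall>l r. l \<le> r \<and> r < length \<sigma> \<and> ival \<sigma> l r \<inter> T = {} \<longrightarrow>
        card (out_nbrs A (ival \<sigma> l r) (\<sigma> ! l)) \<ge> nat (ceiling (real (r - l) / 2)) \<and>
        card (in_nbrs A (ival \<sigma> l r) (\<sigma> ! r)) \<ge> nat (ceiling (real (r - l) / 2)))"

definition dcycle :: "('a \<times> 'a) set \<Rightarrow> 'a list \<Rightarrow> bool" where
  "dcycle A xs \<longleftrightarrow> distinct xs \<and> length xs \<ge> 2 \<and>
     (\<forall>i < length xs. (xs ! i, xs ! ((i + 1) mod length xs)) \<in> A)"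

definition T_cycle :: "('a \<times> 'a) set \<Rightarrow> 'a set \<Rightarrow> 'a list \<Rightarrow> bool" where
  "T_cycle A T xs \<longleftrightarrow> dcycle A xs \<and> set xs \<inter> T \<noteq> {}"

definition dpath :: "('a \<times> 'a) set \<Rightarrow> 'a list \<Rightarrow> 'a \<Rightarrow> 'a \<Rightarrow> bool" where
  "dpath A p u v \<longleftrightarrow> p \<noteq> [] \<and> hd p = u \<and> last p = v \<and> distinct p \<and>
     (\<forall>i. i + 1 < length p \<longrightarrow> (p ! i, p ! (i + 1)) \<in> A)"

definition path_arcs :: "'a list \<Rightarrow> ('a \<times> 'a) set" where
  "path_arcs p = set (zip p (tl p))"

definition reduced :: "'a set \<Rightarrow> ('a \<times> 'a) set \<Rightarrow> 'a set \<Rightarrow> nat \<Rightarrow> 'a list \<Rightarrow> bool" where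
  "reduced V A T k \<sigma> \<longleftrightarrow>
     k \<ge> 1 \<and>
     (\<exists>xs. T_cycle A T xs) \<and>
     (\<forall>v\<in>V. \<exists>xs. T_cycle A T xs \<and> v \<in> set xs) \<and>
     \<not> (\<exists>u v t P. (u, v) \<in> A \<and> affected T \<sigma> (u, v) \<and> t \<in> T \<and> arc_above \<sigma> (u, v) t \<and>
          (\<forall>i\<le>k. dpath A (P i) v u \<and> t \<in> set (P i) \<and>
                  (\<forall>e\<in>path_arcs (P i). forward_arc \<sigma> e)) \<and>
          (\<forall>i\<le>k. \<forall>j\<le>k. i \<noteq> j \<longrightarrow> path_arcs (P i) \<inter> path_arcs (P j) = {}))"

end

theory Submission
  imports Defs
begin

lemma pos_nth: "distinct \<sigma> \<Longrightarrow> m < length \<sigma> \<Longrightarrow> pos \<sigma> (\<sigma> ! m) = m"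
  unfolding pos_def by (rule the_equality) (auto simp: nth_eq_iff_index_eq)

lemma ival_nth: "distinct \<sigma> \<Longrightarrow> m < length \<sigma> \<Longrightarrow> \<sigma> ! m \<in> ival \<sigma> a b \<longleftrightarrow> a \<le> m \<and> m \<le> b"
  unfolding ival_def by (auto simp: nth_eq_iff_index_eq)

lemma ival_img: "b < length \<sigma> \<Longrightarrow> ival \<sigma> a b = (\<lambda>m. \<sigma> ! m) ` {a..b}"
  unfolding ival_def by auto

lemma above_nth: "distinct \<sigma> \<Longrightarrow> a < length \<sigma> \<Longrightarrow> b < length \<sigma> \<Longrightarrow> m < length \<sigma> \<Longrightarrow>
  arc_above \<sigma> (\<sigma> ! a, \<sigma> ! b) (\<sigma> ! m) \<longleftrightarrow> b < a \<and> b \<le> m \<and> m \<le> a"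
  unfolding arc_above_def backward_arc_def by (auto simp: pos_nth ival_nth)

lemma tour_dich: "tournament V A \<Longrightarrow> u \<in> V \<Longrightarrow> v \<in> V \<Longrightarrow> u \<noteq> v \<Longrightarrow> (u,v) \<in> A \<longleftrightarrow> (v,u) \<notin> A"
  unfolding tournament_def by blast

lemma tour_in_out: assumes "tournament V A" "X \<subseteq> V" "v \<in> X"
  shows "card (in_nbrs A X v) + card (out_nbrs A X v) \<le> card X - 1"
proof -
  have fin: "finite X" using assms unfolding tournament_def by (meson finite_subset)
  have "in_nbrs A X v \<inter> out_nbrs A X v = {}"
    using assms unfolding in_nbrs_def out_nbrs_def tournament_def by (auto, metis subsetD)
  moreover have "in_nbrs A X v \<union> out_nbrs A X v \<subseteq> X - {v}"
    using assms unfolding in_nbrs_def out_nbrs_def tournament_def by blast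
  ultimately have "card (in_nbrs A X v) + card (out_nbrs A X v) \<le> card (X - {v})"
  proof -
    assume d: "in_nbrs A X v \<inter> out_nbrs A X v = {}" and s: "in_nbrs A X v \<union> out_nbrs A X v \<subseteq> X - {v}"
    have f1: "finite (in_nbrs A X v)" "finite (out_nbrs A X v)" using s fin
      by (meson finite_Diff finite_subset le_supE)+
    have "card (in_nbrs A X v) + card (out_nbrs A X v) = card (in_nbrs A X v \<union> out_nbrs A X v)"
      using card_Un_disjoint[OF f1 d] by simp
    also have "\<dots> \<le> card (X - {v})" using s fin by (intro card_mono) auto
    finally show ?thesis .
  qed
  thus ?thesis using assms fin by simp
qed

lemma card_diff_real: "finite S \<Longrightarrow> B \<subseteq> S \<Longrightarrow> real (card (S - B)) \<ge> real (card S) - real (card B)"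
  by (simp add: card_Diff_subset card_mono finite_subset of_nat_diff)

lemma left_side:
  assumes tour: "tournament V A" and ord: "is_order V \<sigma>" and reg: "regular_order A T \<sigma>"
    and cst: "real (cost A T \<sigma>) \<le> \<alpha> * real k"
    and il: "l < i" and iN: "i < length \<sigma>" and tT: "\<sigma> ! i \<in> T"
    and big: "real i > real l + (2*(\<alpha>+1)*real k + 2)"
  shows "\<exists>X. X \<subseteq> {l<..<i} \<and> card X \<ge> k+1 \<and> (\<forall>x\<in>X. (\<sigma>!l,\<sigma>!x)\<in>A \<and> (\<sigma>!x,\<sigma>!i)\<in>A)"
proof -
  have dist: "distinct \<sigma>" and setV: "set \<sigma> = V" using ord unfolding is_order_def by auto
  have finV: "finite V" and AV: "A \<subseteq> V \<times> V" using tour unfolding tournament_def by auto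
  have inV: "\<And>m. m < length \<sigma> \<Longrightarrow> \<sigma> ! m \<in> V" using setV nth_mem by blast
  have inj: "\<And>a b. a < length \<sigma> \<Longrightarrow> b < length \<sigma> \<Longrightarrow> \<sigma>!a = \<sigma>!b \<longleftrightarrow> a = b"
    using dist by (simp add: nth_eq_iff_index_eq)
  define S where "S = {l<..<i}"
  define P where "P = (\<lambda>m. l \<le> m \<and> m \<le> i \<and> \<sigma> ! m \<in> T)"
  define j where "j = (LEAST m. P m)"
  have Pi: "P i" using il tT unfolding P_def by auto
  have Pj: "P j" unfolding j_def using Pi by (rule LeastI)
  have jmin: "\<And>m. l \<le> m \<Longrightarrow> m < j \<Longrightarrow> \<sigma> ! m \<notin> T"
  proof -
    fix m assume "l \<le> m" "m < j"
    moreover have "m \<le> i" using Pj \<open>m < j\<close> unfolding P_def by auto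
    ultimately show "\<sigma> ! m \<notin> T" using not_less_Least[of m P] unfolding j_def P_def by auto
  qed
  have lj: "l \<le> j" and ji: "j \<le> i" and jT: "\<sigma> ! j \<in> T" using Pj unfolding P_def by auto
  define B1 where "B1 = {x\<in>S. (\<sigma>!i,\<sigma>!x)\<in>A}"
  define B2 where "B2 = {x\<in>S. j \<le> x \<and> (\<sigma>!x,\<sigma>!l)\<in>A}"
  define B3 where "B3 = {x\<in>S. x < j \<and> (\<sigma>!x,\<sigma>!l)\<in>A}"
  have Sn: "\<And>x. x \<in> S \<Longrightarrow> l < x \<and> x < i \<and> x < length \<sigma>" using iN unfolding S_def by auto
  have good: "\<forall>x\<in>S - (B1 \<union> B2 \<union> B3). (\<sigma>!l,\<sigma>!x)\<in>A \<and> (\<sigma>!x,\<sigma>!i)\<in>A"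
  proof
    fix x assume x: "x \<in> S - (B1 \<union> B2 \<union> B3)"
    hence xS: "x \<in> S" and nb: "(\<sigma>!x,\<sigma>!l)\<notin>A" "(\<sigma>!i,\<sigma>!x)\<notin>A"
      unfolding B1_def B2_def B3_def by auto
    have xx: "l < x" "x < i" "x < length \<sigma>" using Sn[OF xS] by auto
    have "\<sigma>!x \<noteq> \<sigma>!l" "\<sigma>!x \<noteq> \<sigma>!i" using xx inj iN il by auto
    moreover have "\<sigma>!x \<in> V" "\<sigma>!l \<in> V" "\<sigma>!i \<in> V" using inV xx iN il by auto
    ultimately show "(\<sigma>!l,\<sigma>!x)\<in>A \<and> (\<sigma>!x,\<sigma>!i)\<in>A"
      using tour_dich[OF tour] nb by blast
  qed
  define E where "E = {e \<in> A. affected T \<sigma> e}"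
  have finE: "finite E" unfolding E_def using finV AV
    by (metis (no_types, lifting) finite_SigmaI finite_subset mem_Collect_eq subset_iff)
  have c12: "card B1 + card B2 \<le> cost A T \<sigma>"
  proof -
    define f1 where "f1 = (\<lambda>x. (\<sigma>!i, \<sigma>!x))"
    define f2 where "f2 = (\<lambda>x. (\<sigma>!x, \<sigma>!l))"
    have i1: "inj_on f1 B1" unfolding inj_on_def f1_def B1_def using Sn inj by auto
    have i2: "inj_on f2 B2" unfolding inj_on_def f2_def B2_def using Sn inj by auto
    have s1: "f1 ` B1 \<subseteq> E"
    proof
      fix e assume "e \<in> f1 ` B1"
      then obtain x where x: "x \<in> B1" "e = f1 x" by auto
      have xx: "l < x" "x < i" "x < length \<sigma>" using Sn x(1) unfolding B1_def by auto
      have "arc_above \<sigma> (\<sigma>!i, \<sigma>!x) (\<sigma>!i)" using above_nth[OF dist iN xx(3) iN] xx by auto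
      thus "e \<in> E" using x tT unfolding E_def affected_def f1_def B1_def by auto
    qed
    have s2: "f2 ` B2 \<subseteq> E"
    proof
      fix e assume "e \<in> f2 ` B2"
      then obtain x where x: "x \<in> B2" "e = f2 x" by auto
      have xx: "l < x" "x < i" "x < length \<sigma>" "j \<le> x" using Sn x(1) unfolding B2_def by auto
      have "arc_above \<sigma> (\<sigma>!x, \<sigma>!l) (\<sigma>!j)" using above_nth[OF dist xx(3), of l j] xx lj ji iN by auto
      thus "e \<in> E" using x jT unfolding E_def affected_def f2_def B2_def by auto
    qed
    have d: "f1 ` B1 \<inter> f2 ` B2 = {}"
      unfolding f1_def f2_def B1_def B2_def using Sn inj by fastforce
    have "card B1 + card B2 = card (f1 ` B1) + card (f2 ` B2)"
      using card_image[OF i1] card_image[OF i2] by simp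
    also have "\<dots> = card (f1 ` B1 \<union> f2 ` B2)"
      using d finE s1 s2 by (metis card_Un_disjoint finite_subset)
    also have "\<dots> \<le> card E" using finE s1 s2 by (intro card_mono) auto
    finally show ?thesis unfolding E_def cost_def .
  qed
  have c3: "2 * real (card B3) \<le> real (i - l - 1)"
  proof (cases "j = l")
    case True
    hence "B3 = {}" unfolding B3_def using Sn by fastforce
    thus ?thesis by simp
  next
    case False
    define r' where "r' = j - 1"
    have r'': "l \<le> r'" "r' < length \<sigma>" "r' < j" using False lj ji iN unfolding r'_def by auto
    define I where "I = ival \<sigma> l r'"
    have IT: "I \<inter> T = {}" unfolding I_def ival_def using jmin r'' by auto
    have outc: "card (out_nbrs A I (\<sigma>!l)) \<ge> nat (ceiling (real (r' - l) / 2))"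
      using reg r'' IT unfolding regular_order_def I_def by blast
    have IV: "I \<subseteq> V" unfolding I_def ival_def using inV by auto
    have lI: "\<sigma>!l \<in> I" unfolding I_def using ival_nth[OF dist, of l] r'' by auto
    have cI: "card I = r' - l + 1" unfolding I_def ival_img[OF r''(2)]
      using inj r''(1,2) by (subst card_image) (auto simp: inj_on_def)
    have io: "card (in_nbrs A I (\<sigma>!l)) + card (out_nbrs A I (\<sigma>!l)) \<le> r' - l"
      using tour_in_out[OF tour IV lI] cI by simp
    have "(\<lambda>x. \<sigma>!x) ` B3 \<subseteq> in_nbrs A I (\<sigma>!l)"
    proof
      fix y assume "y \<in> (\<lambda>x. \<sigma>!x) ` B3"
      then obtain x where x: "x \<in> S" "x < j" "(\<sigma>!x,\<sigma>!l)\<in>A" "y = \<sigma>!x" unfolding B3_def by auto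
      have "l < x" "x < length \<sigma>" "x \<le> r'" using Sn[OF x(1)] x(2) unfolding r'_def by auto
      thus "y \<in> in_nbrs A I (\<sigma>!l)" unfolding in_nbrs_def I_def using x ival_nth[OF dist] by auto
    qed
    moreover have "inj_on (\<lambda>x. \<sigma>!x) B3" unfolding inj_on_def B3_def using Sn inj by auto
    moreover have "finite (in_nbrs A I (\<sigma>!l))" using finV IV unfolding in_nbrs_def
      by (metis (no_types, lifting) finite_subset mem_Collect_eq subsetI)
    ultimately have "card B3 \<le> card (in_nbrs A I (\<sigma>!l))"
      by (metis card_image card_mono)
    hence "card B3 + nat (ceiling (real (r' - l) / 2)) \<le> r' - l" using io outc by linarith
    hence "real (card B3) + real (r' - l) / 2 \<le> real (r' - l)"
      by (smt (verit) of_nat_add of_nat_le_iff ceiling_correct real_nat_ceiling_ge)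
    moreover have "r' - l \<le> i - l - 1" using r'' ji by auto
    ultimately show ?thesis by linarith
  qed
  have finS: "finite S" unfolding S_def by simp
  have cS: "card S = i - l - 1" unfolding S_def by simp
  have "real (card (S - (B1 \<union> B2 \<union> B3))) \<ge> real (card S) - real (card (B1 \<union> B2 \<union> B3))"
    by (rule card_diff_real[OF finS]) (auto simp: B1_def B2_def B3_def)
  moreover have "card (B1 \<union> B2 \<union> B3) \<le> card B1 + card B2 + card B3"
    by (meson add_le_mono card_Un_le le_trans order_refl)
  moreover have "real (i - l - 1) > 2*(\<alpha>*real k) + 2 * real k + 1" using big il
    by (simp add: of_nat_diff algebra_simps)
  moreover have "real (card B1) + real (card B2) \<le> real (cost A T \<sigma>)"
    using c12 by (metis of_nat_add of_nat_le_iff)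
  ultimately have "real (card (S - (B1 \<union> B2 \<union> B3))) > real k"
    using c3 cst cS by (smt (verit) of_nat_add of_nat_le_iff)
  hence "card (S - (B1 \<union> B2 \<union> B3)) \<ge> k + 1" by linarith
  thus ?thesis using good unfolding S_def by (intro exI[of _ "S - (B1 \<union> B2 \<union> B3)"]) (auto simp: S_def)
qed

lemma right_side:
  assumes tour: "tournament V A" and ord: "is_order V \<sigma>" and reg: "regular_order A T \<sigma>"
    and cst: "real (cost A T \<sigma>) \<le> \<alpha> * real k"
    and ir: "i < r" and rN: "r < length \<sigma>" and tT: "\<sigma> ! i \<in> T"
    and big: "real i < real r - (2*(\<alpha>+1)*real k + 2)"
  shows "\<exists>Y. Y \<subseteq> {i<..<r} \<and> card Y \<ge> k+1 \<and> (\<forall>y\<in>Y. (\<sigma>!i,\<sigma>!y)\<in>A \<and> (\<sigma>!y,\<sigma>!r)\<in>A)"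
proof -
  have dist: "distinct \<sigma>" and setV: "set \<sigma> = V" using ord unfolding is_order_def by auto
  have finV: "finite V" and AV: "A \<subseteq> V \<times> V" using tour unfolding tournament_def by auto
  have inV: "\<And>m. m < length \<sigma> \<Longrightarrow> \<sigma> ! m \<in> V" using setV nth_mem by blast
  have inj: "\<And>a b. a < length \<sigma> \<Longrightarrow> b < length \<sigma> \<Longrightarrow> \<sigma>!a = \<sigma>!b \<longleftrightarrow> a = b"
    using dist by (simp add: nth_eq_iff_index_eq)
  have iN: "i < length \<sigma>" using ir rN by simp
  define S where "S = {i<..<r}"
  define P where "P = (\<lambda>m. i \<le> m \<and> m \<le> r \<and> \<sigma> ! m \<in> T)"
  define j where "j = (GREATEST m. P m)"
  have Pi: "P i" using ir tT unfolding P_def by auto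
  have Pb: "\<And>y. P y \<Longrightarrow> y \<le> r" unfolding P_def by auto
  have Pj: "P j" unfolding j_def using Pi Pb by (rule GreatestI_nat)
  have jmax: "\<And>m. j < m \<Longrightarrow> m \<le> r \<Longrightarrow> \<sigma> ! m \<notin> T"
  proof -
    fix m assume "j < m" "m \<le> r"
    moreover have "i \<le> m" using Pj \<open>j < m\<close> unfolding P_def by auto
    ultimately show "\<sigma> ! m \<notin> T" using Greatest_le_nat[of P m r] Pb unfolding j_def P_def by force
  qed
  have ij: "i \<le> j" and jr: "j \<le> r" and jT: "\<sigma> ! j \<in> T" using Pj unfolding P_def by auto
  define B1 where "B1 = {x\<in>S. (\<sigma>!x,\<sigma>!i)\<in>A}"
  define B2 where "B2 = {x\<in>S. x \<le> j \<and> (\<sigma>!r,\<sigma>!x)\<in>A}"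
  define B3 where "B3 = {x\<in>S. j < x \<and> (\<sigma>!r,\<sigma>!x)\<in>A}"
  have Sn: "\<And>x. x \<in> S \<Longrightarrow> i < x \<and> x < r \<and> x < length \<sigma>" using rN unfolding S_def by auto
  have good: "\<forall>x\<in>S - (B1 \<union> B2 \<union> B3). (\<sigma>!i,\<sigma>!x)\<in>A \<and> (\<sigma>!x,\<sigma>!r)\<in>A"
  proof
    fix x assume x: "x \<in> S - (B1 \<union> B2 \<union> B3)"
    hence xS: "x \<in> S" and nb: "(\<sigma>!r,\<sigma>!x)\<notin>A" "(\<sigma>!x,\<sigma>!i)\<notin>A"
      unfolding B1_def B2_def B3_def by auto
    have xx: "i < x" "x < r" "x < length \<sigma>" using Sn[OF xS] by auto
    have "\<sigma>!x \<noteq> \<sigma>!i" "\<sigma>!x \<noteq> \<sigma>!r" using xx inj iN rN by auto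
    moreover have "\<sigma>!x \<in> V" "\<sigma>!r \<in> V" "\<sigma>!i \<in> V" using inV xx iN rN by auto
    ultimately show "(\<sigma>!i,\<sigma>!x)\<in>A \<and> (\<sigma>!x,\<sigma>!r)\<in>A"
      using tour_dich[OF tour] nb by blast
  qed
  define E where "E = {e \<in> A. affected T \<sigma> e}"
  have finE: "finite E" unfolding E_def using finV AV
    by (metis (no_types, lifting) finite_SigmaI finite_subset mem_Collect_eq subset_iff)
  have c12: "card B1 + card B2 \<le> cost A T \<sigma>"
  proof -
    define f1 where "f1 = (\<lambda>x. (\<sigma>!x, \<sigma>!i))"
    define f2 where "f2 = (\<lambda>x. (\<sigma>!r, \<sigma>!x))"
    have i1: "inj_on f1 B1" unfolding inj_on_def f1_def B1_def using Sn inj by auto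
    have i2: "inj_on f2 B2" unfolding inj_on_def f2_def B2_def using Sn inj by auto
    have s1: "f1 ` B1 \<subseteq> E"
    proof
      fix e assume "e \<in> f1 ` B1"
      then obtain x where x: "x \<in> B1" "e = f1 x" by auto
      have xx: "i < x" "x < r" "x < length \<sigma>" using Sn x(1) unfolding B1_def by auto
      have "arc_above \<sigma> (\<sigma>!x, \<sigma>!i) (\<sigma>!i)" using above_nth[OF dist xx(3) iN iN] xx by auto
      thus "e \<in> E" using x tT unfolding E_def affected_def f1_def B1_def by auto
    qed
    have s2: "f2 ` B2 \<subseteq> E"
    proof
      fix e assume "e \<in> f2 ` B2"
      then obtain x where x: "x \<in> B2" "e = f2 x" by auto
      have xx: "i < x" "x < r" "x < length \<sigma>" "x \<le> j" using Sn x(1) unfolding B2_def by auto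
      have "arc_above \<sigma> (\<sigma>!r, \<sigma>!x) (\<sigma>!j)" using above_nth[OF dist rN xx(3), of j] xx jr rN by auto
      thus "e \<in> E" using x jT unfolding E_def affected_def f2_def B2_def by auto
    qed
    have d: "f1 ` B1 \<inter> f2 ` B2 = {}"
      unfolding f1_def f2_def B1_def B2_def using Sn inj rN by fastforce
    have "card B1 + card B2 = card (f1 ` B1) + card (f2 ` B2)"
      using card_image[OF i1] card_image[OF i2] by simp
    also have "\<dots> = card (f1 ` B1 \<union> f2 ` B2)"
      using d finE s1 s2 by (metis card_Un_disjoint finite_subset)
    also have "\<dots> \<le> card E" using finE s1 s2 by (intro card_mono) auto
    finally show ?thesis unfolding E_def cost_def .
  qed
  have c3: "2 * real (card B3) \<le> real (r - i - 1)"
  proof (cases "j = r")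
    case True
    hence "B3 = {}" unfolding B3_def using Sn by fastforce
    thus ?thesis by simp
  next
    case False
    define l' where "l' = j + 1"
    have l'': "l' \<le> r" "i < l'" "j < l'" using False ij jr unfolding l'_def by auto
    define I where "I = ival \<sigma> l' r"
    have IT: "I \<inter> T = {}" unfolding I_def ival_def using jmax l'' by auto
    have inc: "card (in_nbrs A I (\<sigma>!r)) \<ge> nat (ceiling (real (r - l') / 2))"
      using reg l'' rN IT unfolding regular_order_def I_def by blast
    have IV: "I \<subseteq> V" unfolding I_def ival_def using inV by auto
    have rI: "\<sigma>!r \<in> I" unfolding I_def using ival_nth[OF dist, of r] l'' rN by auto
    have cI: "card I = r - l' + 1" unfolding I_def ival_img[OF rN]
      using inj rN l'' by (subst card_image) (auto simp: inj_on_def)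
    have io: "card (in_nbrs A I (\<sigma>!r)) + card (out_nbrs A I (\<sigma>!r)) \<le> r - l'"
      using tour_in_out[OF tour IV rI] cI by simp
    have "(\<lambda>x. \<sigma>!x) ` B3 \<subseteq> out_nbrs A I (\<sigma>!r)"
    proof
      fix y assume "y \<in> (\<lambda>x. \<sigma>!x) ` B3"
      then obtain x where x: "x \<in> S" "j < x" "(\<sigma>!r,\<sigma>!x)\<in>A" "y = \<sigma>!x" unfolding B3_def by auto
      have "x < r" "x < length \<sigma>" "l' \<le> x" using Sn[OF x(1)] x(2) unfolding l'_def by auto
      thus "y \<in> out_nbrs A I (\<sigma>!r)" unfolding out_nbrs_def I_def using x ival_nth[OF dist] by auto
    qed
    moreover have "inj_on (\<lambda>x. \<sigma>!x) B3" unfolding inj_on_def B3_def using Sn inj by auto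
    moreover have "finite (out_nbrs A I (\<sigma>!r))" using finV IV unfolding out_nbrs_def
      by (metis (no_types, lifting) finite_subset mem_Collect_eq subsetI)
    ultimately have "card B3 \<le> card (out_nbrs A I (\<sigma>!r))"
      by (metis card_image card_mono)
    hence "card B3 + nat (ceiling (real (r - l') / 2)) \<le> r - l'" using io inc by linarith
    hence "real (card B3) + real (r - l') / 2 \<le> real (r - l')"
      by (smt (verit) of_nat_add of_nat_le_iff ceiling_correct real_nat_ceiling_ge)
    moreover have "r - l' \<le> r - i - 1" using l'' by auto
    ultimately show ?thesis by linarith
  qed
  have finS: "finite S" unfolding S_def by simp
  have cS: "card S = r - i - 1" unfolding S_def by simp
  have "real (card (S - (B1 \<union> B2 \<union> B3))) \<ge> real (card S) - real (card (B1 \<union> B2 \<union> B3))"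
    by (rule card_diff_real[OF finS]) (auto simp: B1_def B2_def B3_def)
  moreover have "card (B1 \<union> B2 \<union> B3) \<le> card B1 + card B2 + card B3"
    by (meson add_le_mono card_Un_le le_trans order_refl)
  moreover have "real (r - i - 1) > 2*(\<alpha>*real k) + 2 * real k + 1" using big ir
    by (simp add: of_nat_diff algebra_simps)
  moreover have "real (card B1) + real (card B2) \<le> real (cost A T \<sigma>)"
    using c12 by (metis of_nat_add of_nat_le_iff)
  ultimately have "real (card (S - (B1 \<union> B2 \<union> B3))) > real k"
    using c3 cst cS by (smt (verit) of_nat_add of_nat_le_iff)
  hence "card (S - (B1 \<union> B2 \<union> B3)) \<ge> k + 1" by linarith
  thus ?thesis using good unfolding S_def by (intro exI[of _ "S - (B1 \<union> B2 \<union> B3)"]) (auto simp: S_def)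
qed

theorem lemma3:
  fixes V :: "'a set" and A :: "('a \<times> 'a) set" and T :: "'a set" and k :: nat
    and \<alpha> :: real and \<sigma> :: "'a list" and t :: 'a and l r :: nat
  assumes "tournament V A" and "T \<subseteq> V" and "k \<ge> 1"
    and "\<alpha> \<ge> 1"
    and "is_order V \<sigma>" and "regular_order A T \<sigma>"
    and "real (cost A T \<sigma>) \<le> \<alpha> * real k"
    and "reduced V A T k \<sigma>"
    and "t \<in> T"
    and "l < length \<sigma>" and "r < length \<sigma>"
    and "(\<sigma> ! r, \<sigma> ! l) \<in> A" and "affected T \<sigma> (\<sigma> ! r, \<sigma> ! l)"
    and "arc_above \<sigma> (\<sigma> ! r, \<sigma> ! l) t"
  shows "\<exists>i < length \<sigma>. t = \<sigma> ! i \<and>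
           ((real l \<le> real i \<and> real i \<le> real l + (2 * (\<alpha> + 1) * real k + 2)) \<or>
            (real r - (2 * (\<alpha> + 1) * real k + 2) \<le> real i \<and> real i \<le> real r))"
proof -
  note tour = assms(1) and ord = assms(5) and reg = assms(6) and cst = assms(7) and red = assms(8)
  have dist: "distinct \<sigma>" using ord unfolding is_order_def by auto
  have inj: "\<And>a b. a < length \<sigma> \<Longrightarrow> b < length \<sigma> \<Longrightarrow> \<sigma>!a = \<sigma>!b \<longleftrightarrow> a = b"
    using dist by (simp add: nth_eq_iff_index_eq)
  have "t \<in> ival \<sigma> l r" using assms(14) unfolding arc_above_def using pos_nth[OF dist] assms(10,11) by auto
  then obtain i where i: "t = \<sigma> ! i" "l \<le> i" "i \<le> r" "i < length \<sigma>" unfolding ival_def by auto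
  show ?thesis
  proof (rule ccontr)
    assume nc: "\<not> ?thesis"
    have bl: "real i > real l + (2*(\<alpha>+1)*real k + 2)" using nc i by auto
    have br: "real i < real r - (2*(\<alpha>+1)*real k + 2)" using nc i by auto
    have pos: "0 \<le> 2*(\<alpha>+1)*real k + 2" using assms(4) by simp
    have li: "l < i" using bl pos by linarith
    have ir: "i < r" using br pos by linarith
    have tT: "\<sigma> ! i \<in> T" using i assms(9) by simp
    obtain X where X: "X \<subseteq> {l<..<i}" "card X \<ge> k+1" "\<forall>x\<in>X. (\<sigma>!l,\<sigma>!x)\<in>A \<and> (\<sigma>!x,\<sigma>!i)\<in>A"
      using left_side[OF tour ord reg cst li i(4) tT bl] by blast
    obtain Y where Y: "Y \<subseteq> {i<..<r}" "card Y \<ge> k+1" "\<forall>y\<in>Y. (\<sigma>!i,\<sigma>!y)\<in>A \<and> (\<sigma>!y,\<sigma>!r)\<in>A"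
      using right_side[OF tour ord reg cst ir assms(11) tT br] by blast
    define xs where "xs = sorted_list_of_set X"
    define ys where "ys = sorted_list_of_set Y"
    have fX: "finite X" using X(1) finite_subset by blast
    have fY: "finite Y" using Y(1) finite_subset by blast
    have xs: "distinct xs" "length xs = card X" "set xs = X" using fX unfolding xs_def by auto
    have ys: "distinct ys" "length ys = card Y" "set ys = Y" using fY unfolding ys_def by auto
    define P where "P = (\<lambda>m. [\<sigma>!l, \<sigma>!(xs!m), \<sigma>!i, \<sigma>!(ys!m), \<sigma>!r])"
    have facts: "\<And>m. m \<le> k \<Longrightarrow> l < xs!m \<and> xs!m < i \<and> i < ys!m \<and> ys!m < r \<and>
         (\<sigma>!l,\<sigma>!(xs!m))\<in>A \<and> (\<sigma>!(xs!m),\<sigma>!i)\<in>A \<and> (\<sigma>!i,\<sigma>!(ys!m))\<in>A \<and> (\<sigma>!(ys!m),\<sigma>!r)\<in>A"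
    proof -
      fix m assume "m \<le> k"
      hence "m < length xs" "m < length ys" using xs(2) ys(2) X(2) Y(2) by linarith+
      hence "xs!m \<in> X" "ys!m \<in> Y" using xs(3) ys(3) nth_mem by blast+
      thus "l < xs!m \<and> xs!m < i \<and> i < ys!m \<and> ys!m < r \<and>
         (\<sigma>!l,\<sigma>!(xs!m))\<in>A \<and> (\<sigma>!(xs!m),\<sigma>!i)\<in>A \<and> (\<sigma>!i,\<sigma>!(ys!m))\<in>A \<and> (\<sigma>!(ys!m),\<sigma>!r)\<in>A"
        using X Y by auto
    qed
    have N: "r < length \<sigma>" using assms(11) .
    have arcs: "\<And>m. path_arcs (P m) = {(\<sigma>!l, \<sigma>!(xs!m)), (\<sigma>!(xs!m), \<sigma>!i), (\<sigma>!i, \<sigma>!(ys!m)), (\<sigma>!(ys!m), \<sigma>!r)}"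
      unfolding path_arcs_def P_def by auto
    have "\<exists>u v t P. (u, v) \<in> A \<and> affected T \<sigma> (u, v) \<and> t \<in> T \<and> arc_above \<sigma> (u, v) t \<and>
          (\<forall>i\<le>k. dpath A (P i) v u \<and> t \<in> set (P i) \<and>
                  (\<forall>e\<in>path_arcs (P i). forward_arc \<sigma> e)) \<and>
          (\<forall>i\<le>k. \<forall>j\<le>k. i \<noteq> j \<longrightarrow> path_arcs (P i) \<inter> path_arcs (P j) = {})"
    proof (intro exI conjI allI impI)
      show "(\<sigma>!r, \<sigma>!l) \<in> A" "affected T \<sigma> (\<sigma>!r, \<sigma>!l)" "t \<in> T" "arc_above \<sigma> (\<sigma>!r, \<sigma>!l) t"
        using assms by auto
    next
      fix m assume m: "m \<le> k"
      note f = facts[OF m]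
      show "t \<in> set (P m)" unfolding P_def i(1) by simp
      show "\<forall>e\<in>path_arcs (P m). forward_arc \<sigma> e" unfolding arcs forward_arc_def
        using f N by (auto simp: pos_nth[OF dist])
      show "dpath A (P m) (\<sigma>!l) (\<sigma>!r)" unfolding dpath_def
      proof (intro conjI allI impI)
        show "distinct (P m)" unfolding P_def using f N inj by auto
        fix q assume "q + 1 < length (P m)"
        hence "q < 4" unfolding P_def by simp
        hence "q = 0 \<or> q = 1 \<or> q = 2 \<or> q = 3" by arith
        thus "(P m ! q, P m ! (q + 1)) \<in> A" using f by (elim disjE) (simp_all add: P_def)
      qed (auto simp: P_def)
    next
      fix m m' assume m: "m \<le> k" "m' \<le> k" "m \<noteq> m'"
      have "m < length xs" "m < length ys" "m' < length xs" "m' < length ys"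
        using m xs(2) ys(2) X(2) Y(2) by linarith+
      hence d1: "xs!m \<noteq> xs!m'" "ys!m \<noteq> ys!m'" using m(3) xs(1) ys(1)
        by (auto simp: nth_eq_iff_index_eq)
      show "path_arcs (P m) \<inter> path_arcs (P m') = {}" unfolding arcs
        using facts[OF m(1)] facts[OF m(2)] d1 N inj by auto
    qed
    thus False using red unfolding reduced_def by blast
  qed
qed

end
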